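(* Let $\mathcal{A}$ be a finite abelian group with $|\mathcal{A}|\ge 3$. Let $G$ be the graph consisting of a $5$-cycle $v_1v_2v_3v_4v_5v_1$ together with one further neighbour $u$ of $v_2$, where $u$ is a support vertex all of whose neighbours other than $v_2$ are pendant vertices (so $d(v_2)=3$). Then $G$ is $\mathcal{A}$-vertex magic if and only if $|\mathcal{A}|$ is even.
   Context: A pendant vertex has degree $1$; a support vertex is adjacent to at least one pendant vertex. A map $\ell:V(G)\to\mathcal{A}\setminus\{0\}$ is an $\mathcal{A}$-vertex magic labeling if there is $\mu\in\mathcal{A}$ with $\sum_{w\in N(v)}\ell(w)=\mu$ for every vertex $v$; $G$ is $\mathcal{A}$-vertex magic if such a labeling exists. *)

theory Defs
  imports Main
begin

definition nbhd :: "'v set \<Rightarrow> ('v \<Rightarrow> 'v \<Rightarrow> bool) \<Rightarrow> 'v \<Rightarrow> 'v set" where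
  "nbhd V E v = {w \<in> V. E v w}"

definition is_vertex_magic_labeling ::
  "'v set \<Rightarrow> ('v \<Rightarrow> 'v \<Rightarrow> bool) \<Rightarrow> ('v \<Rightarrow> 'a::comm_monoid_add) \<Rightarrow> bool" where
  "is_vertex_magic_labeling V E l \<longleftrightarrow>
     (\<forall>v\<in>V. l v \<noteq> 0) \<and> (\<exists>mu. \<forall>v\<in>V. (\<Sum>w\<in>nbhd V E v. l w) = mu)"

definition vertex_magic :: "'a::comm_monoid_add itself \<Rightarrow> 'v set \<Rightarrow> ('v \<Rightarrow> 'v \<Rightarrow> bool) \<Rightarrow> bool" where
  "vertex_magic (_::'a itself) V E \<longleftrightarrow>
     (\<exists>l::'v \<Rightarrow> 'a. is_vertex_magic_labeling V E l)"

text \<open>The graph of the corollary: 5-cycle C 0 .. C 4 (v1..v5, so v2 = C 1),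
a vertex U adjacent to C 1, and k pendant vertices P 0 .. P (k-1) adjacent to U.\<close>
datatype vtx = C nat | U | P nat

definition cyc_pend_V :: "nat \<Rightarrow> vtx set" where
  "cyc_pend_V k = {C i | i. i < 5} \<union> {U} \<union> {P j | j. j < k}"

fun cyc_pend_E0 :: "vtx \<Rightarrow> vtx \<Rightarrow> bool" where
  "cyc_pend_E0 (C i) (C j) = (j = (i + 1) mod 5)"
| "cyc_pend_E0 (C i) U = (i = 1)"
| "cyc_pend_E0 U (P j) = True"
| "cyc_pend_E0 _ _ = False"

definition cyc_pend_E :: "vtx \<Rightarrow> vtx \<Rightarrow> bool" where
  "cyc_pend_E x y \<longleftrightarrow> cyc_pend_E0 x y \<or> cyc_pend_E0 y x"

end

theory Submission
  imports Defs
begin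

lemma inv_even:
  "finite A \<Longrightarrow> \<forall>z\<in>A. f z \<in> A \<and> f z \<noteq> z \<and> f (f z) = z \<Longrightarrow> even (card A)"
proof (induction "card A" arbitrary: A rule: less_induct)
  case less
  show ?case
  proof (cases "A = {}")
    case True then show ?thesis by simp
  next
    case False
    then obtain z where z: "z \<in> A" by blast
    define B where "B = A - {z, f z}"
    have fz: "f z \<in> A" "f z \<noteq> z" using less.prems z by auto
    have cB: "card B = card A - 2" unfolding B_def using fz z less.prems(1)
      by (simp add: card_Diff_subset)
    have cA: "card A \<ge> 2" using fz z less.prems(1)
      by (metis card_2_iff card_mono empty_subsetI insert_subset)
    have "\<forall>w\<in>B. f w \<in> B \<and> f w \<noteq> w \<and> f (f w) = w"
      proof
      fix w assume w: "w \<in> B"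
      then have wA: "w \<in> A" "w \<noteq> z" "w \<noteq> f z" unfolding B_def by auto
      have p: "f w \<in> A" "f w \<noteq> w" "f (f w) = w" using less.prems(2) wA(1) by auto
      have "f w \<noteq> z" using wA(3) p(3) by auto
      moreover have "f w \<noteq> f z" using wA(2) p(3) less.prems(2) z by metis
      ultimately show "f w \<in> B \<and> f w \<noteq> w \<and> f (f w) = w" using p unfolding B_def by auto
    qed
    moreover have "finite B" using less.prems(1) B_def by simp
    moreover have "card B < card A" using cB cA by simp
    ultimately have "even (card B)" using less.hyps by blast
    moreover have "card A = card B + 2" using cB cA by arith
    ultimately show ?thesis by simp
  qed
qed

lemma even_iff_two_torsion:
  "even (card (UNIV :: ('a::{ab_group_add, finite}) set)) \<longleftrightarrow> (\<exists>x::'a. x \<noteq> 0 \<and> x + x = 0)"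
proof
  assume e: "even (card (UNIV :: 'a set))"
  show "\<exists>x::'a. x \<noteq> 0 \<and> x + x = 0"
  proof (rule ccontr)
    assume "\<not> ?thesis"
    then have h: "\<forall>x::'a. x \<noteq> 0 \<longrightarrow> - x \<noteq> x"
      by (metis add_eq_0_iff)
    have "even (card (UNIV - {0::'a}))"
      by (rule inv_even[where f = uminus]) (use h in auto)
    moreover have "card (UNIV - {0::'a}) = card (UNIV :: 'a set) - 1"
      by (simp add: card_Diff_singleton)
    moreover have "card (UNIV :: 'a set) \<ge> 1"
      by (simp add: Suc_leI finite_UNIV_card_ge_0)
    ultimately have "card (UNIV :: 'a set) = card (UNIV - {0::'a}) + 1" by linarith
    with e \<open>even (card (UNIV - {0::'a}))\<close> show False by (metis even_plus_one_iff)
  qed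
next
  assume "\<exists>x::'a. x \<noteq> 0 \<and> x + x = 0"
  then obtain x :: 'a where x: "x \<noteq> 0" "x + x = 0" by blast
  have "\<forall>z. z + x \<noteq> z \<and> z + x + x = z" using x by (simp add: add.assoc)
  then show "even (card (UNIV :: 'a set))"
    by (intro inv_even[where f = "\<lambda>z. z + x"]) auto
qed

lemma V_eq: "cyc_pend_V k = {C 0, C 1, C 2, C 3, C 4, U} \<union> P ` {..<k}"
proof -
  have "{C i | i. i < 5} = {C 0, C 1, C 2, C 3, C 4}"
    by (auto simp: less_Suc_eq numeral_eq_Suc)
  then show ?thesis unfolding cyc_pend_V_def by auto
qed

lemma nb_C0: "nbhd (cyc_pend_V k) cyc_pend_E (C 0) = {C 1, C 4}"
  unfolding nbhd_def V_eq cyc_pend_E_def by auto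
lemma nb_C1: "nbhd (cyc_pend_V k) cyc_pend_E (C 1) = {C 0, C 2, U}"
  unfolding nbhd_def V_eq cyc_pend_E_def by auto
lemma nb_C2: "nbhd (cyc_pend_V k) cyc_pend_E (C 2) = {C 1, C 3}"
  unfolding nbhd_def V_eq cyc_pend_E_def by auto
lemma nb_C3: "nbhd (cyc_pend_V k) cyc_pend_E (C 3) = {C 2, C 4}"
  unfolding nbhd_def V_eq cyc_pend_E_def by auto
lemma nb_C4: "nbhd (cyc_pend_V k) cyc_pend_E (C 4) = {C 0, C 3}"
  unfolding nbhd_def V_eq cyc_pend_E_def by auto
lemma nb_U: "nbhd (cyc_pend_V k) cyc_pend_E U = insert (C 1) (P ` {..<k})"
  unfolding nbhd_def V_eq cyc_pend_E_def by auto
lemma nb_P: "nbhd (cyc_pend_V k) cyc_pend_E (P j) = {U}"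
  unfolding nbhd_def V_eq cyc_pend_E_def by auto

theorem corollary3p11:
  fixes k :: nat
  assumes "card (UNIV :: ('a::{ab_group_add, finite}) set) \<ge> 3"
    and "k \<ge> 1"
  shows "vertex_magic TYPE('a) (cyc_pend_V k) cyc_pend_E \<longleftrightarrow> even (card (UNIV :: 'a set))"
proof
  assume "vertex_magic TYPE('a) (cyc_pend_V k) cyc_pend_E"
  then obtain l :: "vtx \<Rightarrow> 'a" and mu where
    nz: "\<forall>v\<in>cyc_pend_V k. l v \<noteq> 0" and
    m: "\<forall>v\<in>cyc_pend_V k. (\<Sum>w\<in>nbhd (cyc_pend_V k) cyc_pend_E v. l w) = mu"
    unfolding vertex_magic_def is_vertex_magic_labeling_def by blast
  have P0: "P 0 \<in> cyc_pend_V k" using assms(2) unfolding V_eq by auto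
  have mem: "C 0 \<in> cyc_pend_V k" "C 1 \<in> cyc_pend_V k" "C 2 \<in> cyc_pend_V k"
    "C 3 \<in> cyc_pend_V k" "C 4 \<in> cyc_pend_V k" "U \<in> cyc_pend_V k"
    unfolding V_eq by auto
  have e0: "l (C 1) + l (C 4) = mu" using m[rule_format, OF mem(1)] unfolding nb_C0 by simp
  have e1: "l (C 0) + (l (C 2) + l U) = mu" using m[rule_format, OF mem(2)] unfolding nb_C1 by simp
  have e2: "l (C 1) + l (C 3) = mu" using m[rule_format, OF mem(3)] unfolding nb_C2 by simp
  have e3: "l (C 2) + l (C 4) = mu" using m[rule_format, OF mem(4)] unfolding nb_C3 by simp
  have e4: "l (C 0) + l (C 3) = mu" using m[rule_format, OF mem(5)] unfolding nb_C4 by simp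
  have eP: "l U = mu" using m[rule_format, OF P0] unfolding nb_P by simp
  have a: "l (C 0) + l (C 2) = 0" using e1 eP by (simp add: add.assoc[symmetric])
  have "l (C 3) = l (C 4)" using e0 e2 by (metis add_left_cancel)
  then have "l (C 2) = l (C 0)" using e3 e4 by (metis add_right_cancel)
  then have "l (C 0) + l (C 0) = 0" using a by simp
  moreover have "l (C 0) \<noteq> 0" using nz mem by blast
  ultimately show "even (card (UNIV :: 'a set))" using even_iff_two_torsion by blast
next
  assume ev: "even (card (UNIV :: 'a set))"
  then obtain a :: 'a where a: "a \<noteq> 0" "a + a = 0" using even_iff_two_torsion by blast
  have na: "- a = a" using a(2) by (metis add_eq_0_iff)
  have c4: "card (UNIV :: 'a set) \<ge> 4" proof -
    have "card (UNIV :: 'a set) \<noteq> 3" using ev by auto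
    then show ?thesis using assms(1) by linarith
  qed
  define s where "s = (\<Sum>j\<in>{1..<k}. a)"
  have "card {0, - s, a - s} \<le> 3" by (rule card_insert_le_m1) (auto simp: card_insert_le_m1)
  then have "{0, - s, a - s} \<noteq> (UNIV :: 'a set)" using c4 by auto
  then obtain y :: 'a where y: "y \<noteq> 0" "y \<noteq> - s" "y \<noteq> a - s" by blast
  define b where "b = y + s"
  have b: "b \<noteq> 0" "b \<noteq> a" using y unfolding b_def
    by (metis add_diff_cancel eq_neg_iff_add_eq_0)+
  have ab: "a + b \<noteq> 0" using b na by (metis add_eq_0_iff)
  define l :: "vtx \<Rightarrow> 'a" where "l = (\<lambda>v. case v of C i \<Rightarrow> (if i = 3 \<or> i = 4 then b else a)
      | U \<Rightarrow> a + b | P j \<Rightarrow> (if j = 0 then y else a))"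
  have sP: "(\<Sum>w\<in>P ` {..<k}. l w) = b"
  proof -
    have "(\<Sum>w\<in>P ` {..<k}. l w) = (\<Sum>j\<in>{..<k}. l (P j))"
      by (subst sum.reindex) (auto simp: inj_on_def)
    also have "\<dots> = (\<Sum>j\<in>insert 0 {1..<k}. l (P j))"
      using assms(2) by (intro sum.cong) auto
    also have "\<dots> = y + (\<Sum>j\<in>{1..<k}. l (P j))"
      by (simp add: l_def)
    also have "(\<Sum>j\<in>{1..<k}. l (P j)) = s" unfolding s_def l_def by (rule sum.cong) auto
    finally show ?thesis unfolding b_def .
  qed
  have "is_vertex_magic_labeling (cyc_pend_V k) cyc_pend_E l"
    unfolding is_vertex_magic_labeling_def
  proof (intro conjI exI ballI)
    fix v assume "v \<in> cyc_pend_V k"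
    then show "l v \<noteq> 0" unfolding V_eq l_def using a b ab y by (auto split: if_splits)
  next
    fix v assume "v \<in> cyc_pend_V k"
    then have "v \<in> {C 0, C 1, C 2, C 3, C 4, U} \<or> (\<exists>j. v = P j)" unfolding V_eq by auto
    then show "(\<Sum>w\<in>nbhd (cyc_pend_V k) cyc_pend_E v. l w) = a + b"
    proof
      assume "v \<in> {C 0, C 1, C 2, C 3, C 4, U}"
      then consider "v = C 0" | "v = C 1" | "v = C 2" | "v = C 3" | "v = C 4" | "v = U" by blast
      then show ?thesis
      proof cases
        case 1 then show ?thesis unfolding 1 nb_C0 by (simp add: l_def)
      next
        case 2 then show ?thesis unfolding 2 nb_C1 using a(2) by (simp add: l_def add.assoc[symmetric])
      next
        case 3 then show ?thesis unfolding 3 nb_C2 by (simp add: l_def)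
      next
        case 4 then show ?thesis unfolding 4 nb_C3 by (simp add: l_def)
      next
        case 5 then show ?thesis unfolding 5 nb_C4 by (simp add: l_def add.commute)
      next
        case 6 then show ?thesis unfolding 6 nb_U by (subst sum.insert) (auto simp: sP, simp add: l_def)
      qed
    next
      assume "\<exists>j. v = P j"
      then show ?thesis by (auto simp: nb_P l_def)
    qed
  qed
  then show "vertex_magic TYPE('a) (cyc_pend_V k) cyc_pend_E"
    unfolding vertex_magic_def by blast
qed

end
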